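(* Let $\beta>1$ and $t\in[0,1)$. Then the following are equivalent: (i) $t\in K(t)$; (ii) $t\in E_\beta$; (iii) $t\in\mathcal U$.
   Context: Let $T_\beta\colon[0,1)\to[0,1)$, $T_\beta(x)=\beta x-\lfloor\beta x\rfloor$. For $0<t<1$ let $K(t)=\{x\in[0,1)\colon T_\beta^k(x)\notin(0,t)\text{ for all }k\ge0\}$; set $K(0)=[0,1)$ and $K(1)=\{0\}$. $E_\beta=\{t\in[0,1)\colon K(t')\neq K(t)\text{ for every }t'>t\}$. A parameter $t\in[0,1]$ is a bifurcation parameter if $t\in\{0,1\}$, or $0<t<1$ and for every $\delta>0$ there is $t'\in(t-\delta,t+\delta)$ with $K(t')\neq K(t)$. $\mathcal U$ denotes the set of bifurcation parameters in $[0,1)$. *)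

theory Defs
  imports Complex_Main
begin

definition Tb :: "real \<Rightarrow> real \<Rightarrow> real" where
  "Tb \<beta> x = \<beta> * x - of_int \<lfloor>\<beta> * x\<rfloor>"

definition Kset :: "real \<Rightarrow> real \<Rightarrow> real set" where
  "Kset \<beta> t =
     (if t = 0 then {0..<1}
      else if t = 1 then {0}
      else {x \<in> {0..<1}. \<forall>k::nat. (Tb \<beta> ^^ k) x \<notin> {0<..<t}})"

definition Ebeta :: "real \<Rightarrow> real set" where
  "Ebeta \<beta> = {t \<in> {0..<1}. \<forall>t'\<in>{0..1}. t' > t \<longrightarrow> Kset \<beta> t' \<noteq> Kset \<beta> t}"

definition bifurcation :: "real \<Rightarrow> real \<Rightarrow> bool" where
  "bifurcation \<beta> t \<longleftrightarrow> t \<in> {0..1} \<and>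
     (t = 0 \<or> t = 1 \<or>
      (\<forall>\<delta>>0. \<exists>t'\<in>{0..1}. t - \<delta> < t' \<and> t' < t + \<delta> \<and> Kset \<beta> t' \<noteq> Kset \<beta> t))"

definition Ubeta :: "real \<Rightarrow> real set" where
  "Ubeta \<beta> = {t \<in> {0..<1}. bifurcation \<beta> t}"

end

theory Submission
  imports Defs
begin

lemma Kset_mid: "t \<noteq> 0 \<Longrightarrow> t \<noteq> 1 \<Longrightarrow>
  x \<in> Kset b t \<longleftrightarrow> x \<in> {0..<1} \<and> \<not> (\<exists>k. (Tb b ^^ k) x \<in> {0<..<t})"
  unfolding Kset_def by simp

lemma Tb_zero: "Tb b 0 = 0"
  by (simp add: Tb_def)

lemma iter_zero: "(Tb b ^^ m) 0 = 0"
  by (induction m) (auto simp: Tb_zero)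

lemma iter_nz:
  assumes "(Tb b ^^ n) t \<noteq> 0" "j \<le> n"
  shows "(Tb b ^^ j) t \<noteq> 0"
proof
  assume h: "(Tb b ^^ j) t = 0"
  obtain m where "n = m + j" using assms(2) le_iff_add by (metis add.commute)
  then have "(Tb b ^^ n) t = (Tb b ^^ m) ((Tb b ^^ j) t)" by (simp add: funpow_add)
  with h assms(1) show False by (simp add: iter_zero)
qed

lemma Tb_cont:
  assumes "Tb b y \<noteq> 0"
  shows "isCont (Tb b) y"
proof -
  have ni: "b * y \<notin> \<int>"
  proof
    assume "b * y \<in> \<int>"
    then obtain k where "b * y = of_int k" by (auto elim: Ints_cases)
    then have "Tb b y = 0" by (simp add: Tb_def)
    with assms show False by simp
  qed
  have "isCont (\<lambda>x. real_of_int \<lfloor>x\<rfloor>) (b*y)"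
    using continuous_floor [OF ni] by (simp add: o_def)
  then have c: "isCont ((\<lambda>x. real_of_int \<lfloor>x\<rfloor>) \<circ> (\<lambda>x. b * x)) y"
    by (intro continuous_at_compose) (auto intro: continuous_intros)
  have "isCont (\<lambda>x. b * x - real_of_int \<lfloor>b * x\<rfloor>) y"
    using c by (intro continuous_intros) (auto simp: o_def)
  then show ?thesis unfolding Tb_def[abs_def] .
qed

lemma iter_cont:
  assumes "(Tb b ^^ n) t \<noteq> 0" "j \<le> n"
  shows "isCont (Tb b ^^ j) t"
  using assms(2)
proof (induction j)
  case 0
  then show ?case by simp
next
  case (Suc j)
  have "Tb b ((Tb b ^^ j) t) \<noteq> 0" using iter_nz[OF assms(1) Suc.prems] by simp
  then have "isCont (Tb b) ((Tb b ^^ j) t)" by (rule Tb_cont)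
  moreover have "isCont (Tb b ^^ j) t" using Suc by simp
  ultimately have "isCont (Tb b \<circ> (Tb b ^^ j)) t" by (intro continuous_at_compose)
  then show ?case by (simp add: o_def)
qed

lemma K_eq:
  assumes n: "(Tb b ^^ n) t \<in> {0<..<t}" and t: "0 < t" "t < 1"
  shows "\<exists>e>0. \<forall>t'. \<bar>t' - t\<bar> < e \<longrightarrow> Kset b t' = Kset b t"
proof -
  define s where "s = (Tb b ^^ n) t"
  have s: "0 < s" "s < t" using n by (auto simp: s_def)
  define eta where "eta = (t - s) / 2"
  have eta: "eta > 0" using s by (simp add: eta_def)
  have "isCont (Tb b ^^ n) t" using iter_cont[where b=b and n=n and t=t and j=n] s by (simp add: s_def)
  then have "(Tb b ^^ n) \<midarrow>t\<rightarrow> s" by (simp add: isCont_def s_def)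
  then obtain d where d: "d > 0" "\<And>x. x \<noteq> t \<Longrightarrow> norm (x - t) < d \<Longrightarrow> norm ((Tb b ^^ n) x - s) < min s eta"
    using LIM_D[of "Tb b ^^ n" s t "min s eta"] s eta by auto
  have close: "(Tb b ^^ n) x \<in> {0<..<t - eta}" if "\<bar>x - t\<bar> < d" for x
  proof (cases "x = t")
    case True then show ?thesis using s eta by (simp add: s_def[symmetric] eta_def field_simps)
  next
    case False
    then have "\<bar>(Tb b ^^ n) x - s\<bar> < min s eta" using d(2)[of x] that by simp
    then have "(Tb b ^^ n) x - s < eta" "s - (Tb b ^^ n) x < s" by (auto simp: abs_less_iff)
    then show ?thesis by (simp add: eta_def field_simps)
  qed
  define e where "e = min d (min eta (1 - t))"
  have e: "e > 0" using d eta t by (simp add: e_def)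
  have key: "(\<exists>k. (Tb b ^^ k) x \<in> {0<..<a}) \<Longrightarrow> (\<exists>k. (Tb b ^^ k) x \<in> {0<..<a'})"
    if "\<bar>a - t\<bar> < e" "\<bar>a' - t\<bar> < e" for x a a'
  proof -
    assume "\<exists>k. (Tb b ^^ k) x \<in> {0<..<a}"
    then obtain k where k: "(Tb b ^^ k) x \<in> {0<..<a}" by blast
    show ?thesis
    proof (cases "(Tb b ^^ k) x < a'")
      case True then show ?thesis using k by auto
    next
      case False
      then have "\<bar>(Tb b ^^ k) x - t\<bar> < d" using k that by (auto simp: e_def)
      then have "(Tb b ^^ n) ((Tb b ^^ k) x) \<in> {0<..<t - eta}" by (rule close)
      then have "(Tb b ^^ (n + k)) x \<in> {0<..<a'}" using that
        by (auto simp: funpow_add e_def)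
      then show ?thesis by blast
    qed
  qed
  show ?thesis
  proof (intro exI[of _ e] conjI allI impI e)
    fix t' assume h: "\<bar>t' - t\<bar> < e"
    have t'1: "t' \<noteq> 0" "t' \<noteq> 1" using h s eta t by (auto simp: e_def eta_def)
    have tt: "\<bar>t - t\<bar> < e" using e by simp
    have "x \<in> Kset b t' \<longleftrightarrow> x \<in> Kset b t" for x
      using t t'1 key[OF h tt, of x] key[OF tt h, of x] Kset_mid[where t=t' and b=b and x=x] Kset_mid[where t=t and b=b and x=x] by auto
    then show "Kset b t' = Kset b t" by blast
  qed
qed

theorem mainTheorem3:
  fixes \<beta> t :: real
  assumes "\<beta> > 1" and "0 \<le> t" and "t < 1"
  shows "(t \<in> Kset \<beta> t \<longleftrightarrow> t \<in> Ebeta \<beta>) \<and> (t \<in> Ebeta \<beta> \<longleftrightarrow> t \<in> Ubeta \<beta>)"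
proof (cases "t = 0")
  case True
  have K0: "Kset \<beta> t' \<noteq> Kset \<beta> 0" if "t' \<in> {0..1}" "t' > 0" for t'
  proof (cases "t' = 1")
    case True
    have "Kset \<beta> t' = {0}" "Kset \<beta> 0 = {0..<1}" using True by (simp_all add: Kset_def)
    moreover have "(1/2::real) \<in> {0..<1}" "(1/2::real) \<notin> {0}" by auto
    ultimately show ?thesis by metis
  next
    case False
    have "(Tb \<beta> ^^ 0) (t'/2) \<in> {0<..<t'}" using that by simp
    then have "t'/2 \<notin> Kset \<beta> t'" using that False Kset_mid[where t=t' and x="t'/2" and b=\<beta>] by blast
    moreover have "t'/2 \<in> Kset \<beta> 0" using that by (simp add: Kset_def)
    ultimately show ?thesis by blast
  qed
  have "t \<in> Kset \<beta> t" using True by (simp add: Kset_def)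
  moreover have "t \<in> Ebeta \<beta>" using True K0 unfolding Ebeta_def by auto
  moreover have "t \<in> Ubeta \<beta>" using True unfolding Ubeta_def bifurcation_def by auto
  ultimately show ?thesis by blast
next
  case False
  then have t0: "0 < t" using assms by simp
  have KT: "t \<in> Kset \<beta> t \<longleftrightarrow> (\<forall>k. (Tb \<beta> ^^ k) t \<notin> {0<..<t})"
    using t0 assms by (simp add: Kset_def)
  have A: "t \<in> Ebeta \<beta>" if "t \<in> Kset \<beta> t"
  proof -
    have "Kset \<beta> t' \<noteq> Kset \<beta> t" if "t' \<in> {0..1}" "t' > t" for t'
    proof -
      have "t \<notin> Kset \<beta> t'"
      proof (cases "t' = 1")
        case True then show ?thesis using t0 by (simp add: Kset_def)
      next
        case False
        have "(Tb \<beta> ^^ 0) t \<in> {0<..<t'}" using that t0 by simp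
        then show ?thesis using that False t0 Kset_mid[where t=t' and x=t and b=\<beta>] by fastforce
      qed
      then show ?thesis using \<open>t \<in> Kset \<beta> t\<close> by blast
    qed
    then show ?thesis using assms by (auto simp: Ebeta_def)
  qed
  have B: "t \<in> Ubeta \<beta>" if "t \<in> Ebeta \<beta>"
  proof -
    have "\<exists>t'\<in>{0..1}. t - \<delta> < t' \<and> t' < t + \<delta> \<and> Kset \<beta> t' \<noteq> Kset \<beta> t" if "\<delta> > 0" for \<delta>
    proof -
      define t' where "t' = min (t + \<delta>/2) 1"
      have "t' \<in> {0..1}" "t' > t" "t - \<delta> < t'" "t' < t + \<delta>"
        using assms that t0 by (auto simp: t'_def)
      then show ?thesis using \<open>t \<in> Ebeta \<beta>\<close> unfolding Ebeta_def by blast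
    qed
    then show ?thesis using assms by (auto simp: Ubeta_def bifurcation_def)
  qed
  have C: "t \<in> Kset \<beta> t" if "t \<in> Ubeta \<beta>"
  proof (rule ccontr)
    assume "t \<notin> Kset \<beta> t"
    then obtain n where n: "(Tb \<beta> ^^ n) t \<in> {0<..<t}" using KT by blast
    obtain e where e: "e > 0" "\<And>t'. \<bar>t' - t\<bar> < e \<Longrightarrow> Kset \<beta> t' = Kset \<beta> t"
      using K_eq[OF n t0 assms(3)] by blast
    have "bifurcation \<beta> t" using that by (simp add: Ubeta_def)
    then have "\<exists>t'\<in>{0..1}. t - e < t' \<and> t' < t + e \<and> Kset \<beta> t' \<noteq> Kset \<beta> t"
      using e(1) t0 assms(3) unfolding bifurcation_def by auto
    then obtain t' where "t - e < t'" "t' < t + e" "Kset \<beta> t' \<noteq> Kset \<beta> t" by blast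
    then show False using e(2)[of t'] by (auto simp: abs_less_iff)
  qed
  show ?thesis using A B C by blast
qed

end
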